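(* The permutation representability problem is polynomial-time reducible to the group representability problem on trees.
   Context: Permutation representability problem: given a finite group $G$ (by its multiplication table) and an integer $n$ in unary, decide whether there is a nontrivial homomorphism from $G$ to the symmetric group $S_n$. Group representability problem on trees: given a finite group $G$ (by its multiplication table) and a finite tree $T$, decide whether there is a nontrivial homomorphism from $G$ to the automorphism group $\mathrm{Aut}(T)$ of $T$. *)

theory Defs
  imports "HOL-Algebra.Sym_Groups"
begin

text \<open>Only addition and truncated subtraction are available (no multiplication),
  together with indirect addressing; with unit cost this model is polynomially
  equivalent to Turing machines.\<close>

datatype instr =
    Const nat nat
  | Add nat nat nat
  | Sub nat nat nat
  | Load nat nat
  | Store nat nat
  | Jz nat nat
  | Jmp nat

type_synonym config = "nat \<times> (nat \<Rightarrow> nat)"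

fun exec_instr :: "instr \<Rightarrow> config \<Rightarrow> config" where
  "exec_instr (Const r c) (pc, M) = (Suc pc, M(r := c))"
| "exec_instr (Add r a b) (pc, M) = (Suc pc, M(r := M a + M b))"
| "exec_instr (Sub r a b) (pc, M) = (Suc pc, M(r := M a - M b))"
| "exec_instr (Load r a) (pc, M) = (Suc pc, M(r := M (M a)))"
| "exec_instr (Store a r) (pc, M) = (Suc pc, M(M a := M r))"
| "exec_instr (Jz r l) (pc, M) = (if M r = 0 then (l, M) else (Suc pc, M))"
| "exec_instr (Jmp l) (pc, M) = (l, M)"

definition step :: "instr list \<Rightarrow> config \<Rightarrow> config" where
  "step prog c = (if fst c < length prog then exec_instr (prog ! fst c) c else c)"

definition run :: "instr list \<Rightarrow> nat \<Rightarrow> config \<Rightarrow> config" where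
  "run prog t c = (step prog ^^ t) c"

definition halted :: "instr list \<Rightarrow> config \<Rightarrow> bool" where
  "halted prog c \<longleftrightarrow> length prog \<le> fst c"

text \<open>Input/output convention: cell 0 holds the length, cells 1..len the words.\<close>

definition init_config :: "nat list \<Rightarrow> config" where
  "init_config xs = (0, \<lambda>i. if i = 0 then length xs
                            else if i \<le> length xs then xs ! (i - 1) else 0)"

definition output_of :: "config \<Rightarrow> nat list" where
  "output_of c = map (\<lambda>i. snd c (Suc i)) [0..<snd c 0]"

fun bitlen :: "nat \<Rightarrow> nat" where
  "bitlen n = (if n = 0 then 0 else Suc (bitlen (n div 2)))"

definition input_size :: "nat list \<Rightarrow> nat" where
  "input_size xs = (\<Sum>x\<leftarrow>xs. Suc (bitlen x))"

definition poly_time_computable :: "(nat list \<Rightarrow> nat list) \<Rightarrow> bool" where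
  "poly_time_computable f \<longleftrightarrow>
     (\<exists>prog c d. \<forall>xs.
        (\<exists>t. t \<le> c * (input_size xs + 1) ^ d
             \<and> halted prog (run prog t (init_config xs))
             \<and> output_of (run prog t (init_config xs)) = f xs)
        \<and> input_size (f xs) \<le> c * (input_size xs + 1) ^ d)"

text \<open>Polynomial-time (many-one) reduction between promise problems, each given
  by a set of admissible instances and a set of yes-instances.\<close>

definition poly_reducible ::
  "nat list set \<Rightarrow> nat list set \<Rightarrow> nat list set \<Rightarrow> nat list set \<Rightarrow> bool" where
  "poly_reducible I1 Y1 I2 Y2 \<longleftrightarrow>
     (\<exists>f. poly_time_computable f \<and>
          (\<forall>xs\<in>I1. f xs \<in> I2 \<and> (xs \<in> Y1 \<longleftrightarrow> f xs \<in> Y2)))"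

text \<open>A table for a group of order m is a list of length m*m over {0..<m};
  the product of i and j is the entry in row i, column j.\<close>

definition table_group :: "nat \<Rightarrow> nat list \<Rightarrow> nat monoid" where
  "table_group m tab =
     \<lparr> carrier = {0..<m},
       mult = (\<lambda>i j. tab ! (i * m + j)),
       one = (THE e. e < m \<and> (\<forall>x<m. tab ! (e * m + x) = x \<and> tab ! (x * m + e) = x)) \<rparr>"

definition valid_group_table :: "nat \<Rightarrow> nat list \<Rightarrow> bool" where
  "valid_group_table m tab \<longleftrightarrow> length tab = m * m \<and> group (table_group m tab)"

definition nontrivial_hom :: "('a, 'c) monoid_scheme \<Rightarrow> ('b, 'd) monoid_scheme \<Rightarrow> bool" where
  "nontrivial_hom G H \<longleftrightarrow>
     (\<exists>h \<in> hom G H. \<exists>g \<in> carrier G. h g \<noteq> \<one>\<^bsub>H\<^esub>)"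

definition adj :: "(nat \<times> nat) list \<Rightarrow> nat \<Rightarrow> nat \<Rightarrow> bool" where
  "adj es u v \<longleftrightarrow> (u, v) \<in> set es \<or> (v, u) \<in> set es"

definition graph_connected :: "nat \<Rightarrow> (nat \<times> nat) list \<Rightarrow> bool" where
  "graph_connected k es \<longleftrightarrow> (\<forall>u<k. \<forall>v<k. (adj es)\<^sup>*\<^sup>* u v)"

definition has_cycle :: "(nat \<times> nat) list \<Rightarrow> bool" where
  "has_cycle es \<longleftrightarrow>
     (\<exists>vs. length vs \<ge> 3 \<and> distinct vs
           \<and> (\<forall>i. Suc i < length vs \<longrightarrow> adj es (vs ! i) (vs ! Suc i))
           \<and> adj es (last vs) (hd vs))"

definition is_tree :: "nat \<Rightarrow> (nat \<times> nat) list \<Rightarrow> bool" where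
  "is_tree k es \<longleftrightarrow> k \<ge> 1
     \<and> (\<forall>(u, v) \<in> set es. u < k \<and> v < k \<and> u \<noteq> v)
     \<and> graph_connected k es \<and> \<not> has_cycle es"

definition aut_group :: "nat \<Rightarrow> (nat \<times> nat) list \<Rightarrow> (nat \<Rightarrow> nat) monoid" where
  "aut_group k es =
     \<lparr> carrier = {p. p permutes {0..<k} \<and> (\<forall>u v. adj es u v \<longleftrightarrow> adj es (p u) (p v))},
       mult = (\<circ>), one = id \<rparr>"

text \<open>Permutation representability: input is m, the table, then n in unary.\<close>

definition enc_perm :: "nat \<Rightarrow> nat list \<Rightarrow> nat \<Rightarrow> nat list" where
  "enc_perm m tab n = m # tab @ replicate n 1"

definition PermRep_instances :: "nat list set" where
  "PermRep_instances = {enc_perm m tab n | m tab n. valid_group_table m tab}"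

definition PermRep_yes :: "nat list set" where
  "PermRep_yes = {enc_perm m tab n | m tab n.
      valid_group_table m tab \<and> nontrivial_hom (table_group m tab) (sym_group n)}"

definition enc_tree :: "nat \<Rightarrow> nat list \<Rightarrow> nat \<Rightarrow> (nat \<times> nat) list \<Rightarrow> nat list" where
  "enc_tree m tab k es = m # tab @ k # concat (map (\<lambda>(u, v). [u, v]) es)"

definition TreeRep_instances :: "nat list set" where
  "TreeRep_instances = {enc_tree m tab k es | m tab k es.
      valid_group_table m tab \<and> is_tree k es}"

definition TreeRep_yes :: "nat list set" where
  "TreeRep_yes = {enc_tree m tab k es | m tab k es.
      valid_group_table m tab \<and> is_tree k es
      \<and> nontrivial_hom (table_group m tab) (aut_group k es)}"

end

theory Submission
  imports Defs
begin


definition star :: "nat \<Rightarrow> (nat \<times> nat) list" where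
  "star n = map (\<lambda>i. (0, i)) [1..<n+1]"

lemma adj_star: "adj (star n) u v \<longleftrightarrow> (u = 0 \<and> 1 \<le> v \<and> v \<le> n) \<or> (v = 0 \<and> 1 \<le> u \<and> u \<le> n)"
  by (auto simp: adj_def star_def)

lemma star_tree: "is_tree (n+1) (star n)"
proof -
  have conn: "graph_connected (n+1) (star n)"
    unfolding graph_connected_def
  proof (intro allI impI)
    fix u v assume u: "u < n+1" and v: "v < n+1"
    have a: "(adj (star n))\<^sup>*\<^sup>* u 0" if "x = u" "u < n+1" for x
      using that by (cases "u = 0") (auto simp: adj_star intro: r_into_rtranclp)
    have b: "(adj (star n))\<^sup>*\<^sup>* 0 v"
      using v by (cases "v = 0") (auto simp: adj_star intro: r_into_rtranclp)
    show "(adj (star n))\<^sup>*\<^sup>* u v" using a[OF refl u] b by (rule rtranclp_trans)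
  qed
  have nc: "\<not> has_cycle (star n)"
  proof
    assume "has_cycle (star n)"
    then obtain vs where l: "length vs \<ge> 3" and d: "distinct vs"
      and c: "\<forall>i. Suc i < length vs \<longrightarrow> adj (star n) (vs ! i) (vs ! Suc i)"
      and e: "adj (star n) (last vs) (hd vs)" unfolding has_cycle_def by blast
    have a01: "adj (star n) (vs!0) (vs!1)" using c l by auto
    have a12: "adj (star n) (vs!1) (vs!2)" using c l by (auto simp: numeral_2_eq_2)
    have d02: "vs!0 \<noteq> vs!2" "vs!0 \<noteq> vs!1" "vs!1 \<noteq> vs!2"
      proof -
      have D: "\<forall>i<length vs. \<forall>j<length vs. i \<noteq> j \<longrightarrow> vs!i \<noteq> vs!j" using d by (simp add: distinct_conv_nth)
      have L0: "0 < length vs" and L1: "1 < length vs" and L2: "2 < length vs" using l by auto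
      show "vs!0 \<noteq> vs!2" using D[rule_format, OF L0 L2] by simp
      show "vs!0 \<noteq> vs!1" using D[rule_format, OF L0 L1] by simp
      show "vs!1 \<noteq> vs!2" using D[rule_format, OF L1 L2] by simp
    qed
    have hd: "hd vs = vs!0" using l by (cases vs) auto
    have ne: "vs \<noteq> []" using l by (cases vs) auto
    have last: "last vs = vs!(length vs - 1)" using ne by (simp add: last_conv_nth)
    have d1: "vs!(length vs - 1) \<noteq> vs!1" using d l by (auto simp: nth_eq_iff_index_eq)
    show False
    proof (cases "vs!1 = 0")
      case True
      then have "vs!0 \<noteq> 0" using d02 by auto
      then have "last vs = 0" using e hd by (auto simp: adj_star)
      then show False using d1 True last by simp
    next
      case False
      then show False using a01 a12 d02 by (auto simp: adj_star)
    qed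
  qed
  have ed: "\<forall>(u, v) \<in> set (star n). u < n+1 \<and> v < n+1 \<and> u \<noteq> v" by (auto simp: star_def)
  show ?thesis unfolding is_tree_def using conn nc ed by simp
qed

definition nn :: "nat \<Rightarrow> nat" where "nn n = (if n = 1 then 0 else n)"

lemma carrier_aut_star:
  "carrier (aut_group (nn n + 1) (star (nn n))) = carrier (sym_group n)"
proof (cases "n \<le> 1")
  case True
  then have nn0: "nn n = 0" by (auto simp: nn_def)
  have s0: "{0..<nn n + 1} = {0}" using nn0 by auto
  have s1: "p permutes {1..n} \<longleftrightarrow> p = id" for p
  proof (cases n)
    case 0 then show ?thesis by simp
  next
    case (Suc k) then have "n = 1" using True by simp
    then show ?thesis by simp
  qed
  show ?thesis
  proof (rule Set.set_eqI)
    fix p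
    have "p \<in> carrier (aut_group (nn n + 1) (star (nn n))) \<longleftrightarrow> p = id"
    proof
      assume "p \<in> carrier (aut_group (nn n + 1) (star (nn n)))"
      then have "p permutes {0}" unfolding aut_group_def s0 by simp
      then show "p = id" by simp
    next
      assume "p = id" then show "p \<in> carrier (aut_group (nn n + 1) (star (nn n)))"
        unfolding aut_group_def s0 by (simp add: permutes_id)
    qed
    moreover have "p \<in> carrier (sym_group n) \<longleftrightarrow> p = id" using s1 by (simp add: sym_group_def)
    ultimately show "p \<in> carrier (aut_group (nn n + 1) (star (nn n))) \<longleftrightarrow> p \<in> carrier (sym_group n)" by simp
  qed
next
  case False
  then have nn: "nn n = n" by (auto simp: nn_def)
  have r: "{0..<n+1} = insert 0 {1..n}" by auto
  show ?thesis unfolding nn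
  proof (rule Set.set_eqI, rule iffI)
    fix p assume "p \<in> carrier (aut_group (n + 1) (star n))"
    then have pp: "p permutes {0..<n+1}" and pa: "\<And>u v. adj (star n) u v \<longleftrightarrow> adj (star n) (p u) (p v)"
      by (auto simp: aut_group_def)
    have p0: "p 0 = 0"
    proof (rule ccontr)
      assume a: "p 0 \<noteq> 0"
      have "adj (star n) (p 0) (p 1)" "adj (star n) (p 0) (p 2)"
        using pa[of 0 1] pa[of 0 2] False by (auto simp: adj_star)
      then have "p 1 = 0" "p 2 = 0" using a by (auto simp: adj_star)
      then have "p 1 = p 2" by simp
      then have "(1::nat) = 2" by (rule injD[OF permutes_inj[OF pp]])
      then show False by simp
    qed
    have "p permutes {1..n}"
    proof (rule permutes_superset[OF pp])
      fix x assume "x \<in> {0..<n+1} - {1..n}"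
      then have "x = 0" by auto
      then show "p x = x" using p0 by simp
    qed
    then show "p \<in> carrier (sym_group n)" by (simp add: sym_group_def)
  next
    fix p assume "p \<in> carrier (sym_group n)"
    then have pp: "p permutes {1..n}" by (simp add: sym_group_def)
    have p0: "p 0 = 0" using permutes_not_in[OF pp] by simp
    have sub: "{1..n} \<subseteq> {0..<n+1}" by auto
    have pp': "p permutes {0..<n+1}" using permutes_subset[OF pp sub] .
    have inI: "\<And>x. p x \<in> {1..n} \<longleftrightarrow> x \<in> {1..n}" using permutes_in_image[OF pp] by blast
    have z: "\<And>x. p x = 0 \<longleftrightarrow> x = 0" using p0 permutes_inj[OF pp] by (metis injD)
    have "adj (star n) u v \<longleftrightarrow> adj (star n) (p u) (p v)" for u v
    proof -
      have i1: "(1 \<le> p x \<and> p x \<le> n) \<longleftrightarrow> (1 \<le> x \<and> x \<le> n)" for x using inI[of x] by simp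
      show ?thesis unfolding adj_star using i1[of u] i1[of v] z[of u] z[of v] by argo
    qed
    then show "p \<in> carrier (aut_group (n + 1) (star n))" using pp' by (simp add: aut_group_def)
  qed
qed

lemma nontrivial_hom_cong:
  assumes "carrier H1 = carrier H2" "mult H1 = mult H2" "one H1 = one H2"
  shows "nontrivial_hom G H1 = nontrivial_hom G H2"
  using assms unfolding nontrivial_hom_def hom_def by simp

lemma hom_equiv:
  "nontrivial_hom G (sym_group n) = nontrivial_hom G (aut_group (nn n + 1) (star (nn n)))"
  by (rule nontrivial_hom_cong[OF carrier_aut_star[symmetric]]) (simp_all add: sym_group_def aut_group_def)




definition redf :: "nat list \<Rightarrow> nat list" where
 "redf xs = (if xs = [] \<or> hd xs = 0 \<or> length xs < 1 + hd xs * hd xs then xs else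
    (let m = hd xs; P = 1 + m*m; n = nn (length xs - P) in
      take P xs @ [n+1] @ concat (map (\<lambda>i. [0,i]) [1..<n+1])))"

lemma valid_pos: "valid_group_table m tab \<Longrightarrow> m \<ge> 1"
proof -
  assume "valid_group_table m tab"
  then have "group (table_group m tab)" by (simp add: valid_group_table_def)
  then have "one (table_group m tab) \<in> carrier (table_group m tab)" by (rule monoid.one_closed[OF group.is_monoid])
  then show "m \<ge> 1" by (simp add: table_group_def) 
qed

lemma pairs_inj: "concat (map (\<lambda>(u, v). [u, v]) es) = concat (map (\<lambda>(u, v). [u, v]) es') \<Longrightarrow> es = es'"
proof (induction es arbitrary: es')
  case Nil then show ?case by (cases es') auto
next
  case (Cons a es) then show ?case by (cases es'; cases a) auto
qed

lemma enc_perm_inj: "enc_perm m tab n = enc_perm m' tab' n' \<Longrightarrow> length tab = m*m \<Longrightarrow> length tab' = m'*m'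
   \<Longrightarrow> m = m' \<and> tab = tab' \<and> n = n'"
  unfolding enc_perm_def by (metis append_eq_append_conv length_replicate list.inject)

lemma enc_tree_inj: "enc_tree m tab k es = enc_tree m' tab' k' es' \<Longrightarrow> length tab = m*m \<Longrightarrow> length tab' = m'*m'
   \<Longrightarrow> m = m' \<and> tab = tab' \<and> k = k' \<and> es = es'"
  unfolding enc_tree_def using pairs_inj by (metis append_eq_append_conv list.inject)

lemma redf_enc: "valid_group_table m tab \<Longrightarrow>
   redf (enc_perm m tab n) = enc_tree m tab (nn n + 1) (star (nn n))"
proof -
  assume v: "valid_group_table m tab"
  then have m: "m \<ge> 1" and l: "length tab = m*m" using valid_pos by (auto simp: valid_group_table_def)
  have c: "concat (map (\<lambda>(u, v). [u, v]) (star k)) = concat (map (\<lambda>i. [0,i]) [1..<k+1])" for k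
    by (simp add: star_def o_def)
  show ?thesis using m l
    by (simp add: redf_def enc_perm_def enc_tree_def c Let_def)
qed

lemma redf_correct: "xs \<in> PermRep_instances \<Longrightarrow>
   redf xs \<in> TreeRep_instances \<and> (xs \<in> PermRep_yes \<longleftrightarrow> redf xs \<in> TreeRep_yes)"
proof -
  assume "xs \<in> PermRep_instances"
  then obtain m tab n where xs: "xs = enc_perm m tab n" and v: "valid_group_table m tab"
    unfolding PermRep_instances_def by blast
  have l: "length tab = m*m" using v by (simp add: valid_group_table_def)
  have r: "redf xs = enc_tree m tab (nn n + 1) (star (nn n))" using redf_enc[OF v] xs by simp
  have i: "redf xs \<in> TreeRep_instances" unfolding r TreeRep_instances_def using v star_tree by blast
  have "xs \<in> PermRep_yes \<longleftrightarrow> nontrivial_hom (table_group m tab) (sym_group n)"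
  proof
    assume "xs \<in> PermRep_yes"
    then obtain m' tab' n' where e: "xs = enc_perm m' tab' n'" and v': "valid_group_table m' tab'"
       and h: "nontrivial_hom (table_group m' tab') (sym_group n')" unfolding PermRep_yes_def by blast
    have "m = m' \<and> tab = tab' \<and> n = n'" using enc_perm_inj[of m tab n m' tab' n'] e xs l v'
      by (simp add: valid_group_table_def)
    then show "nontrivial_hom (table_group m tab) (sym_group n)" using h by simp
  next
    assume "nontrivial_hom (table_group m tab) (sym_group n)"
    then show "xs \<in> PermRep_yes" unfolding PermRep_yes_def using xs v by blast
  qed
  also have "\<dots> \<longleftrightarrow> nontrivial_hom (table_group m tab) (aut_group (nn n + 1) (star (nn n)))"
    by (rule hom_equiv)
  also have "\<dots> \<longleftrightarrow> redf xs \<in> TreeRep_yes"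
  proof
    assume "nontrivial_hom (table_group m tab) (aut_group (nn n + 1) (star (nn n)))"
    then show "redf xs \<in> TreeRep_yes" unfolding r TreeRep_yes_def using v star_tree by blast
  next
    assume "redf xs \<in> TreeRep_yes"
    then obtain m' tab' k' es' where e: "redf xs = enc_tree m' tab' k' es'" and v': "valid_group_table m' tab'"
       and h: "nontrivial_hom (table_group m' tab') (aut_group k' es')" unfolding TreeRep_yes_def by blast
    have "m = m' \<and> tab = tab' \<and> nn n + 1 = k' \<and> star (nn n) = es'"
      using enc_tree_inj[of m tab "nn n + 1" "star (nn n)" m' tab' k' es'] e r l v'
      by (simp add: valid_group_table_def)
    then show "nontrivial_hom (table_group m tab) (aut_group (nn n + 1) (star (nn n)))" using h by simp
  qed
  finally show ?thesis using i by simp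
qed




lemma run_Suc: "run p (Suc t) c = run p t (step p c)"
  unfolding run_def funpow_Suc_right by simp
lemma run_0: "run p 0 c = c" by (simp add: run_def)
lemma run_num: "run p (numeral k) c = run p (pred_numeral k) (step p c)"
  by (simp add: numeral_eq_Suc run_Suc)
lemma run_add: "run p (a + b) c = run p b (run p a c)"
  unfolding run_def by (metis funpow_add add.commute comp_apply)

lemma step_pc: "pc < length p \<Longrightarrow> step p (pc, M) = exec_instr (p ! pc) (pc, M)"
  by (simp add: step_def)

definition prog :: "instr list" where "prog = [
   Jz 1 131,
   Add 0 0 1,
   Sub 1 0 1,
   Add 0 0 1,
   Add 0 0 1,
   Add 0 0 1,
   Add 0 0 1,
   Add 0 0 1,
   Add 0 0 1,
   Add 0 0 1,
   Add 0 0 1,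
   Add 0 0 1,
   Add 0 0 1,
   Add 0 0 1,
   Store 0 2,
   Const 2 3,
   Add 2 0 2,
   Store 2 3,
   Const 3 1,
   Add 2 2 3,
   Store 2 4,
   Add 2 2 3,
   Store 2 5,
   Add 2 2 3,
   Store 2 6,
   Add 2 2 3,
   Store 2 7,
   Add 2 2 3,
   Store 2 8,
   Add 2 2 3,
   Store 2 9,
   Add 2 2 3,
   Store 2 10,
   Add 2 2 3,
   Store 2 11,
   Load 4 0,
   Const 2 2,
   Add 2 0 2,
   Store 2 4,
   Add 4 1 1,
   Add 4 4 4,
   Add 7 4 4,
   Add 4 4 7,
   Sub 4 0 4,
   Const 2 1,
   Add 2 0 2,
   Store 2 4,
   Const 11 0,
   Const 5 1,
   Add 6 4 11,
   Jz 6 57,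
   Add 5 5 4,
   Sub 7 5 1,
   Jz 7 55,
   Jmp 96,
   Sub 6 6 3,
   Jmp 50,
   Sub 7 1 5,
   Jz 7 63,
   Sub 2 7 3,
   Jz 2 62,
   Jmp 63,
   Const 7 0,
   Add 8 5 3,
   Add 9 7 3,
   Const 2 11,
   Sub 2 8 2,
   Jz 2 70,
   Store 8 9,
   Jmp 72,
   Add 2 0 8,
   Store 2 9,
   Const 9 1,
   Add 10 7 11,
   Jz 10 94,
   Add 8 8 3,
   Const 2 11,
   Sub 2 8 2,
   Jz 2 81,
   Store 8 11,
   Jmp 83,
   Add 2 0 8,
   Store 2 11,
   Add 8 8 3,
   Const 2 11,
   Sub 2 8 2,
   Jz 2 89,
   Store 8 9,
   Jmp 91,
   Add 2 0 8,
   Store 2 9,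
   Add 9 9 3,
   Sub 10 10 3,
   Jmp 74,
   Store 0 8,
   Jmp 97,
   Store 0 1,
   Const 1 1,
   Add 1 0 1,
   Const 2 2,
   Add 2 0 2,
   Const 3 3,
   Add 3 0 3,
   Const 4 4,
   Add 4 0 4,
   Const 5 5,
   Add 5 0 5,
   Const 6 6,
   Add 6 0 6,
   Const 7 7,
   Add 7 0 7,
   Const 8 8,
   Add 8 0 8,
   Const 9 9,
   Add 9 0 9,
   Const 10 10,
   Add 10 0 10,
   Const 11 11,
   Add 11 0 11,
   Load 1 1,
   Load 2 2,
   Load 3 3,
   Load 4 4,
   Load 5 5,
   Load 6 6,
   Load 7 7,
   Load 8 8,
   Load 9 9,
   Load 10 10,
   Load 11 11,
   Load 0 0]"

lemma prog_len: "length prog = 131" by (simp add: prog_def)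

lemma prog_0: "prog ! 0 = Jz 1 131" by (simp add: prog_def)
lemma prog_1: "prog ! 1 = Add 0 0 1" by (simp add: prog_def)
lemma prog_2: "prog ! 2 = Sub 1 0 1" by (simp add: prog_def)
lemma prog_3: "prog ! 3 = Add 0 0 1" by (simp add: prog_def)
lemma prog_4: "prog ! 4 = Add 0 0 1" by (simp add: prog_def)
lemma prog_5: "prog ! 5 = Add 0 0 1" by (simp add: prog_def)
lemma prog_6: "prog ! 6 = Add 0 0 1" by (simp add: prog_def)
lemma prog_7: "prog ! 7 = Add 0 0 1" by (simp add: prog_def)
lemma prog_8: "prog ! 8 = Add 0 0 1" by (simp add: prog_def)
lemma prog_9: "prog ! 9 = Add 0 0 1" by (simp add: prog_def)
lemma prog_10: "prog ! 10 = Add 0 0 1" by (simp add: prog_def)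
lemma prog_11: "prog ! 11 = Add 0 0 1" by (simp add: prog_def)
lemma prog_12: "prog ! 12 = Add 0 0 1" by (simp add: prog_def)
lemma prog_13: "prog ! 13 = Add 0 0 1" by (simp add: prog_def)
lemma prog_14: "prog ! 14 = Store 0 2" by (simp add: prog_def)
lemma prog_15: "prog ! 15 = Const 2 3" by (simp add: prog_def)
lemma prog_16: "prog ! 16 = Add 2 0 2" by (simp add: prog_def)
lemma prog_17: "prog ! 17 = Store 2 3" by (simp add: prog_def)
lemma prog_18: "prog ! 18 = Const 3 1" by (simp add: prog_def)
lemma prog_19: "prog ! 19 = Add 2 2 3" by (simp add: prog_def)
lemma prog_20: "prog ! 20 = Store 2 4" by (simp add: prog_def)
lemma prog_21: "prog ! 21 = Add 2 2 3" by (simp add: prog_def)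
lemma prog_22: "prog ! 22 = Store 2 5" by (simp add: prog_def)
lemma prog_23: "prog ! 23 = Add 2 2 3" by (simp add: prog_def)
lemma prog_24: "prog ! 24 = Store 2 6" by (simp add: prog_def)
lemma prog_25: "prog ! 25 = Add 2 2 3" by (simp add: prog_def)
lemma prog_26: "prog ! 26 = Store 2 7" by (simp add: prog_def)
lemma prog_27: "prog ! 27 = Add 2 2 3" by (simp add: prog_def)
lemma prog_28: "prog ! 28 = Store 2 8" by (simp add: prog_def)
lemma prog_29: "prog ! 29 = Add 2 2 3" by (simp add: prog_def)
lemma prog_30: "prog ! 30 = Store 2 9" by (simp add: prog_def)
lemma prog_31: "prog ! 31 = Add 2 2 3" by (simp add: prog_def)
lemma prog_32: "prog ! 32 = Store 2 10" by (simp add: prog_def)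
lemma prog_33: "prog ! 33 = Add 2 2 3" by (simp add: prog_def)
lemma prog_34: "prog ! 34 = Store 2 11" by (simp add: prog_def)
lemma prog_35: "prog ! 35 = Load 4 0" by (simp add: prog_def)
lemma prog_36: "prog ! 36 = Const 2 2" by (simp add: prog_def)
lemma prog_37: "prog ! 37 = Add 2 0 2" by (simp add: prog_def)
lemma prog_38: "prog ! 38 = Store 2 4" by (simp add: prog_def)
lemma prog_39: "prog ! 39 = Add 4 1 1" by (simp add: prog_def)
lemma prog_40: "prog ! 40 = Add 4 4 4" by (simp add: prog_def)
lemma prog_41: "prog ! 41 = Add 7 4 4" by (simp add: prog_def)
lemma prog_42: "prog ! 42 = Add 4 4 7" by (simp add: prog_def)
lemma prog_43: "prog ! 43 = Sub 4 0 4" by (simp add: prog_def)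
lemma prog_44: "prog ! 44 = Const 2 1" by (simp add: prog_def)
lemma prog_45: "prog ! 45 = Add 2 0 2" by (simp add: prog_def)
lemma prog_46: "prog ! 46 = Store 2 4" by (simp add: prog_def)
lemma prog_47: "prog ! 47 = Const 11 0" by (simp add: prog_def)
lemma prog_48: "prog ! 48 = Const 5 1" by (simp add: prog_def)
lemma prog_49: "prog ! 49 = Add 6 4 11" by (simp add: prog_def)
lemma prog_50: "prog ! 50 = Jz 6 57" by (simp add: prog_def)
lemma prog_51: "prog ! 51 = Add 5 5 4" by (simp add: prog_def)
lemma prog_52: "prog ! 52 = Sub 7 5 1" by (simp add: prog_def)
lemma prog_53: "prog ! 53 = Jz 7 55" by (simp add: prog_def)
lemma prog_54: "prog ! 54 = Jmp 96" by (simp add: prog_def)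
lemma prog_55: "prog ! 55 = Sub 6 6 3" by (simp add: prog_def)
lemma prog_56: "prog ! 56 = Jmp 50" by (simp add: prog_def)
lemma prog_57: "prog ! 57 = Sub 7 1 5" by (simp add: prog_def)
lemma prog_58: "prog ! 58 = Jz 7 63" by (simp add: prog_def)
lemma prog_59: "prog ! 59 = Sub 2 7 3" by (simp add: prog_def)
lemma prog_60: "prog ! 60 = Jz 2 62" by (simp add: prog_def)
lemma prog_61: "prog ! 61 = Jmp 63" by (simp add: prog_def)
lemma prog_62: "prog ! 62 = Const 7 0" by (simp add: prog_def)
lemma prog_63: "prog ! 63 = Add 8 5 3" by (simp add: prog_def)
lemma prog_64: "prog ! 64 = Add 9 7 3" by (simp add: prog_def)
lemma prog_65: "prog ! 65 = Const 2 11" by (simp add: prog_def)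
lemma prog_66: "prog ! 66 = Sub 2 8 2" by (simp add: prog_def)
lemma prog_67: "prog ! 67 = Jz 2 70" by (simp add: prog_def)
lemma prog_68: "prog ! 68 = Store 8 9" by (simp add: prog_def)
lemma prog_69: "prog ! 69 = Jmp 72" by (simp add: prog_def)
lemma prog_70: "prog ! 70 = Add 2 0 8" by (simp add: prog_def)
lemma prog_71: "prog ! 71 = Store 2 9" by (simp add: prog_def)
lemma prog_72: "prog ! 72 = Const 9 1" by (simp add: prog_def)
lemma prog_73: "prog ! 73 = Add 10 7 11" by (simp add: prog_def)
lemma prog_74: "prog ! 74 = Jz 10 94" by (simp add: prog_def)
lemma prog_75: "prog ! 75 = Add 8 8 3" by (simp add: prog_def)
lemma prog_76: "prog ! 76 = Const 2 11" by (simp add: prog_def)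
lemma prog_77: "prog ! 77 = Sub 2 8 2" by (simp add: prog_def)
lemma prog_78: "prog ! 78 = Jz 2 81" by (simp add: prog_def)
lemma prog_79: "prog ! 79 = Store 8 11" by (simp add: prog_def)
lemma prog_80: "prog ! 80 = Jmp 83" by (simp add: prog_def)
lemma prog_81: "prog ! 81 = Add 2 0 8" by (simp add: prog_def)
lemma prog_82: "prog ! 82 = Store 2 11" by (simp add: prog_def)
lemma prog_83: "prog ! 83 = Add 8 8 3" by (simp add: prog_def)
lemma prog_84: "prog ! 84 = Const 2 11" by (simp add: prog_def)
lemma prog_85: "prog ! 85 = Sub 2 8 2" by (simp add: prog_def)
lemma prog_86: "prog ! 86 = Jz 2 89" by (simp add: prog_def)
lemma prog_87: "prog ! 87 = Store 8 9" by (simp add: prog_def)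
lemma prog_88: "prog ! 88 = Jmp 91" by (simp add: prog_def)
lemma prog_89: "prog ! 89 = Add 2 0 8" by (simp add: prog_def)
lemma prog_90: "prog ! 90 = Store 2 9" by (simp add: prog_def)
lemma prog_91: "prog ! 91 = Add 9 9 3" by (simp add: prog_def)
lemma prog_92: "prog ! 92 = Sub 10 10 3" by (simp add: prog_def)
lemma prog_93: "prog ! 93 = Jmp 74" by (simp add: prog_def)
lemma prog_94: "prog ! 94 = Store 0 8" by (simp add: prog_def)
lemma prog_95: "prog ! 95 = Jmp 97" by (simp add: prog_def)
lemma prog_96: "prog ! 96 = Store 0 1" by (simp add: prog_def)
lemma prog_97: "prog ! 97 = Const 1 1" by (simp add: prog_def)
lemma prog_98: "prog ! 98 = Add 1 0 1" by (simp add: prog_def)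
lemma prog_99: "prog ! 99 = Const 2 2" by (simp add: prog_def)
lemma prog_100: "prog ! 100 = Add 2 0 2" by (simp add: prog_def)
lemma prog_101: "prog ! 101 = Const 3 3" by (simp add: prog_def)
lemma prog_102: "prog ! 102 = Add 3 0 3" by (simp add: prog_def)
lemma prog_103: "prog ! 103 = Const 4 4" by (simp add: prog_def)
lemma prog_104: "prog ! 104 = Add 4 0 4" by (simp add: prog_def)
lemma prog_105: "prog ! 105 = Const 5 5" by (simp add: prog_def)
lemma prog_106: "prog ! 106 = Add 5 0 5" by (simp add: prog_def)
lemma prog_107: "prog ! 107 = Const 6 6" by (simp add: prog_def)
lemma prog_108: "prog ! 108 = Add 6 0 6" by (simp add: prog_def)
lemma prog_109: "prog ! 109 = Const 7 7" by (simp add: prog_def)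
lemma prog_110: "prog ! 110 = Add 7 0 7" by (simp add: prog_def)
lemma prog_111: "prog ! 111 = Const 8 8" by (simp add: prog_def)
lemma prog_112: "prog ! 112 = Add 8 0 8" by (simp add: prog_def)
lemma prog_113: "prog ! 113 = Const 9 9" by (simp add: prog_def)
lemma prog_114: "prog ! 114 = Add 9 0 9" by (simp add: prog_def)
lemma prog_115: "prog ! 115 = Const 10 10" by (simp add: prog_def)
lemma prog_116: "prog ! 116 = Add 10 0 10" by (simp add: prog_def)
lemma prog_117: "prog ! 117 = Const 11 11" by (simp add: prog_def)
lemma prog_118: "prog ! 118 = Add 11 0 11" by (simp add: prog_def)
lemma prog_119: "prog ! 119 = Load 1 1" by (simp add: prog_def)
lemma prog_120: "prog ! 120 = Load 2 2" by (simp add: prog_def)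
lemma prog_121: "prog ! 121 = Load 3 3" by (simp add: prog_def)
lemma prog_122: "prog ! 122 = Load 4 4" by (simp add: prog_def)
lemma prog_123: "prog ! 123 = Load 5 5" by (simp add: prog_def)
lemma prog_124: "prog ! 124 = Load 6 6" by (simp add: prog_def)
lemma prog_125: "prog ! 125 = Load 7 7" by (simp add: prog_def)
lemma prog_126: "prog ! 126 = Load 8 8" by (simp add: prog_def)
lemma prog_127: "prog ! 127 = Load 9 9" by (simp add: prog_def)
lemma prog_128: "prog ! 128 = Load 10 10" by (simp add: prog_def)
lemma prog_129: "prog ! 129 = Load 11 11" by (simp add: prog_def)
lemma prog_130: "prog ! 130 = Load 0 0" by (simp add: prog_def)
lemmas prog_nth = prog_0 prog_1 prog_2 prog_3 prog_4 prog_5 prog_6 prog_7 prog_8 prog_9 prog_10 prog_11 prog_12 prog_13 prog_14 prog_15 prog_16 prog_17 prog_18 prog_19 prog_20 prog_21 prog_22 prog_23 prog_24 prog_25 prog_26 prog_27 prog_28 prog_29 prog_30 prog_31 prog_32 prog_33 prog_34 prog_35 prog_36 prog_37 prog_38 prog_39 prog_40 prog_41 prog_42 prog_43 prog_44 prog_45 prog_46 prog_47 prog_48 prog_49 prog_50 prog_51 prog_52 prog_53 prog_54 prog_55 prog_56 prog_57 prog_58 prog_59 prog_60 prog_61 prog_62 prog_63 prog_64 prog_65 prog_66 prog_67 prog_68 prog_69 prog_70 prog_71 prog_72 prog_73 prog_74 prog_75 prog_76 prog_77 prog_78 prog_79 prog_80 prog_81 prog_82 prog_83 prog_84 prog_85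 prog_86 prog_87 prog_88 prog_89 prog_90 prog_91 prog_92 prog_93 prog_94 prog_95 prog_96 prog_97 prog_98 prog_99 prog_100 prog_101 prog_102 prog_103 prog_104 prog_105 prog_106 prog_107 prog_108 prog_109 prog_110 prog_111 prog_112 prog_113 prog_114 prog_115 prog_116 prog_117 prog_118 prog_119 prog_120 prog_121 prog_122 prog_123 prog_124 prog_125 prog_126 prog_127 prog_128 prog_129 prog_130




definition V :: "nat \<Rightarrow> (nat \<Rightarrow> nat) \<Rightarrow> nat \<Rightarrow> nat" where
  "V E M a = (if 1 \<le> a \<and> a \<le> 11 then M (E + a) else M a)"

definition VI :: "nat \<Rightarrow> (nat \<Rightarrow> nat) \<Rightarrow> (nat \<Rightarrow> nat) \<Rightarrow> bool" where
  "VI E M W \<longleftrightarrow> (\<forall>a. 1 \<le> a \<longrightarrow> a < E \<longrightarrow> V E M a = W a)"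

lemma VI_reg[simp]: "1 \<le> r \<Longrightarrow> r \<le> 11 \<Longrightarrow> 11 < E \<Longrightarrow> VI E (M(r := x)) W = VI E M W"
  unfolding VI_def V_def by auto

lemma VI_slot0[simp]: "VI E (M(E := x)) W = VI E M W"
  unfolding VI_def V_def by auto

lemma VI_low: assumes "VI E M W" "11 < p" "p < E" shows "VI E (M(p := x)) (W(p := x))"
proof (unfold VI_def, intro allI impI)
  fix a assume a: "1 \<le> a" "a < E"
  then have "V E M a = W a" using assms(1) by (simp add: VI_def)
  then show "V E (M(p := x)) a = (W(p := x)) a" using assms(2,3) a by (auto simp: V_def)
qed

lemma VI_slot: assumes "VI E M W" "1 \<le> p" "p \<le> 11" shows "VI E (M(E + p := x)) (W(p := x))"
proof (unfold VI_def, intro allI impI)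
  fix a assume a: "1 \<le> a" "a < E"
  then have "V E M a = W a" using assms(1) by (simp add: VI_def)
  then show "V E (M(E + p := x)) a = (W(p := x)) a" using assms(2,3) a by (auto simp: V_def)
qed

lemma prog_1': "prog ! Suc 0 = Add 0 0 1" using prog_1 by simp
lemma s2: "Suc (Suc 0) = 2" by simp

lemma Ene1[simp]: "11 < (E::nat) \<Longrightarrow> j \<le> 11 \<Longrightarrow> (E + k = j) = False" by auto
lemma Ene2[simp]: "11 < (E::nat) \<Longrightarrow> j \<le> 11 \<Longrightarrow> (j = E + k) = False" by auto
lemma Ene3[simp]: "11 < (E::nat) \<Longrightarrow> j \<le> 11 \<Longrightarrow> (E = j) = False" by auto
lemma Ene4[simp]: "11 < (E::nat) \<Longrightarrow> j \<le> 11 \<Longrightarrow> (j = E) = False" by auto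

lemmas ex = run_num run_Suc run_0 step_pc prog_len prog_nth prog_1' s2

lemma boot1: "M 1 \<noteq> 0 \<Longrightarrow> run prog 14 (0, M) = (14, M(0 := 12 * M 0 + M 1, 1 := M 0))"
  by (simp add: ex fun_upd_twist) (rule ext, simp)

lemma boot2:
  assumes "M 0 = E" "M 1 = L" "E = 12 * L + m" "L \<ge> 1" "m \<ge> 1"
  shows "\<exists>M'. run prog 36 (14, M) = (50, M') \<and> M' 0 = E \<and> M' 1 = L \<and> M' 3 = 1 \<and> M' 4 = m
     \<and> M' 5 = 1 \<and> M' 6 = m \<and> M' 11 = 0 \<and> VI E M' (M(1 := m))"
proof -
  have E: "11 < E" using assms by simp
  show ?thesis using assms E
    apply (simp add: ex)
    apply (unfold VI_def V_def)
    apply (intro allI impI)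
    apply (case_tac "a \<le> 11")
     apply (subgoal_tac "a = 1 \<or> a = 2 \<or> a = 3 \<or> a = 4 \<or> a = 5 \<or> a = 6 \<or> a = 7 \<or> a = 8 \<or> a = 9 \<or> a = 10 \<or> a = 11")
      apply (elim disjE; simp)
     apply arith
    apply simp
    done
qed

lemma mul_loop:
  assumes E: "11 < E" and m: "1 \<le> m"
  shows "M 0 = E \<Longrightarrow> M 1 = L \<Longrightarrow> M 3 = 1 \<Longrightarrow> M 4 = m \<Longrightarrow> M 5 = P \<Longrightarrow> M 6 = i
   \<Longrightarrow> M 11 = 0 \<Longrightarrow> VI E M W \<Longrightarrow> P \<le> L \<Longrightarrow>
   \<exists>t M'. t \<le> 7*(L - P) + 7 \<and> run prog t (50, M) = (if P + i*m \<le> L then 57 else 96, M')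
     \<and> M' 0 = E \<and> M' 1 = L \<and> M' 3 = 1 \<and> M' 11 = 0 \<and> VI E M' W
     \<and> (P + i*m \<le> L \<longrightarrow> M' 5 = P + i*m)"
proof (induction i arbitrary: M P)
  case 0
  have "run prog 1 (50, M) = (57, M)" using 0 by (simp add: ex)
  then show ?case using 0 by (intro exI[of _ 1] exI[of _ M]) simp
next
  case (Suc i)
  show ?case
  proof (cases "P + m \<le> L")
    case True
    have "\<exists>M2. run prog 6 (50, M) = (50, M2) \<and> M2 0 = E \<and> M2 1 = L \<and> M2 3 = 1 \<and> M2 4 = m
       \<and> M2 5 = P + m \<and> M2 6 = i \<and> M2 11 = 0 \<and> VI E M2 W"
      using Suc.prems True E by (simp add: ex)
    then obtain M2 where r: "run prog 6 (50, M) = (50, M2)" and M2: "M2 0 = E" "M2 1 = L" "M2 3 = 1" "M2 4 = m"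
       "M2 5 = P + m" "M2 6 = i" "M2 11 = 0" "VI E M2 W" by blast
    obtain t M' where t: "t \<le> 7*(L - (P + m)) + 7" and
       rr: "run prog t (50, M2) = (if P + m + i*m \<le> L then 57 else 96, M')" and
       M': "M' 0 = E \<and> M' 1 = L \<and> M' 3 = 1 \<and> M' 11 = 0 \<and> VI E M' W
     \<and> (P + m + i*m \<le> L \<longrightarrow> M' 5 = P + m + i*m)"
      using Suc.IH[OF M2 True] by blast
    have "run prog (6 + t) (50, M) = (if P + Suc i * m \<le> L then 57 else 96, M')"
      using r rr by (simp add: run_add add.assoc)
    moreover have "6 + t \<le> 7*(L - P) + 7" using t True m by simp
    ultimately show ?thesis using M' by (intro exI[of _ "6+t"] exI[of _ M']) (simp add: add.assoc)
  next
    case False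
    have "\<exists>M2. run prog 5 (50, M) = (96, M2) \<and> M2 0 = E \<and> M2 1 = L \<and> M2 3 = 1 \<and> M2 11 = 0 \<and> VI E M2 W"
      using Suc.prems False E by (simp add: ex)
    then obtain M2 where "run prog 5 (50, M) = (96, M2) \<and> M2 0 = E \<and> M2 1 = L \<and> M2 3 = 1 \<and> M2 11 = 0 \<and> VI E M2 W" by blast
    moreover have "\<not> P + Suc i * m \<le> L" using False by simp
    ultimately show ?thesis by (intro exI[of _ 5] exI[of _ M2]) simp
  qed
qed


lemma w65: assumes A: "M 0 = E" "M 8 = p" "1 \<le> p" "p < E" "11 < E" "VI E M W"
  shows "\<exists>M'. run prog 5 (65, M) = (72, M') \<and> (\<forall>r. r \<le> 11 \<longrightarrow> r \<noteq> 2 \<longrightarrow> M' r = M r)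
     \<and> VI E M' (W(p := M 9))"
proof (cases "p \<le> 11")
  case True
  have "run prog 5 (65, M) = (72, M(2 := E + p, E + p := M 9))"
    using A True by (simp add: ex)
  moreover have "VI E (M(2 := E + p, E + p := M 9)) (W(p := M 9))"
    using VI_slot[of E "M(2 := E + p)" W p "M 9"] A True by simp
  ultimately show ?thesis using A True by (intro exI[of _ "M(2 := E + p, E + p := M 9)"]) auto
next
  case False
  have "run prog 5 (65, M) = (72, M(2 := p - 11, p := M 9))"
    using A False by (simp add: ex)
  moreover have "VI E (M(2 := p - 11, p := M 9)) (W(p := M 9))"
    using VI_low[of E "M(2 := p - 11)" W p "M 9"] A False by simp
  ultimately show ?thesis using A False by (intro exI[of _ "M(2 := p - 11, p := M 9)"]) auto
qed

lemma w76: assumes A: "M 0 = E" "M 8 = p" "1 \<le> p" "p < E" "11 < E" "VI E M W"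
  shows "\<exists>M'. run prog 5 (76, M) = (83, M') \<and> (\<forall>r. r \<le> 11 \<longrightarrow> r \<noteq> 2 \<longrightarrow> M' r = M r)
     \<and> VI E M' (W(p := M 11))"
proof (cases "p \<le> 11")
  case True
  have "run prog 5 (76, M) = (83, M(2 := E + p, E + p := M 11))"
    using A True by (simp add: ex)
  moreover have "VI E (M(2 := E + p, E + p := M 11)) (W(p := M 11))"
    using VI_slot[of E "M(2 := E + p)" W p "M 11"] A True by simp
  ultimately show ?thesis using A True by (intro exI[of _ "M(2 := E + p, E + p := M 11)"]) auto
next
  case False
  have "run prog 5 (76, M) = (83, M(2 := p - 11, p := M 11))"
    using A False by (simp add: ex)
  moreover have "VI E (M(2 := p - 11, p := M 11)) (W(p := M 11))"
    using VI_low[of E "M(2 := p - 11)" W p "M 11"] A False by simp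
  ultimately show ?thesis using A False by (intro exI[of _ "M(2 := p - 11, p := M 11)"]) auto
qed

lemma w84: assumes A: "M 0 = E" "M 8 = p" "1 \<le> p" "p < E" "11 < E" "VI E M W"
  shows "\<exists>M'. run prog 5 (84, M) = (91, M') \<and> (\<forall>r. r \<le> 11 \<longrightarrow> r \<noteq> 2 \<longrightarrow> M' r = M r)
     \<and> VI E M' (W(p := M 9))"
proof (cases "p \<le> 11")
  case True
  have "run prog 5 (84, M) = (91, M(2 := E + p, E + p := M 9))"
    using A True by (simp add: ex)
  moreover have "VI E (M(2 := E + p, E + p := M 9)) (W(p := M 9))"
    using VI_slot[of E "M(2 := E + p)" W p "M 9"] A True by simp
  ultimately show ?thesis using A True by (intro exI[of _ "M(2 := E + p, E + p := M 9)"]) auto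
next
  case False
  have "run prog 5 (84, M) = (91, M(2 := p - 11, p := M 9))"
    using A False by (simp add: ex)
  moreover have "VI E (M(2 := p - 11, p := M 9)) (W(p := M 9))"
    using VI_low[of E "M(2 := p - 11)" W p "M 9"] A False by simp
  ultimately show ?thesis using A False by (intro exI[of _ "M(2 := p - 11, p := M 9)"]) auto
qed


lemma run_seq: "run p t1 c = c1 \<Longrightarrow> run p t2 c1 = c2 \<Longrightarrow> run p (t1 + t2) c = c2"
  by (simp add: run_add)

lemma all11: "(\<forall>a. 1 \<le> a \<longrightarrow> a \<le> (11::nat) \<longrightarrow> Q a) = (Q 1 \<and> Q 2 \<and> Q 3 \<and> Q 4 \<and> Q 5 \<and> Q 6 \<and> Q 7 \<and> Q 8 \<and> Q 9 \<and> Q 10 \<and> Q 11)"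
proof
  assume "Q 1 \<and> Q 2 \<and> Q 3 \<and> Q 4 \<and> Q 5 \<and> Q 6 \<and> Q 7 \<and> Q 8 \<and> Q 9 \<and> Q 10 \<and> Q 11"
  then show "\<forall>a. 1 \<le> a \<longrightarrow> a \<le> (11::nat) \<longrightarrow> Q a"
    by (auto simp: le_Suc_eq numeral_eq_Suc)
qed simp

lemma done_a:
  assumes A: "M 0 = E" "M 1 = L" "M 3 = 1" "M 5 = P" "M 11 = 0" "VI E M W" "11 < E"
  shows "\<exists>t M'. t \<le> 5 \<and> run prog t (57, M) = (63, M') \<and> M' 0 = E \<and> M' 3 = 1 \<and> M' 5 = P
      \<and> M' 7 = nn (L - P) \<and> M' 11 = 0 \<and> VI E M' W"
proof -
  consider "L - P = 0" | "L - P = 1" | "L - P \<noteq> 0 \<and> L - P \<noteq> 1" by blast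
  then show ?thesis
  proof cases
    case 1
    have "run prog 2 (57, M) = (63, M(7 := L - P))" using A 1 by (simp add: ex)
    then show ?thesis using A 1 by (intro exI[of _ 2] exI[of _ "M(7 := L - P)"]) (simp add: nn_def)
  next
    case 2
    have "run prog 5 (57, M) = (63, M(7 := 0, 2 := 0))" using A 2 by (simp add: ex fun_upd_twist)
    then show ?thesis using A 2 by (intro exI[of _ 5] exI[of _ "M(7 := 0, 2 := 0)"]) (simp add: nn_def)
  next
    case 3
    have f: "L - P - 1 \<noteq> 0" "L - P \<noteq> 0" using 3 by auto
    have "run prog 5 (57, M) = (63, M(7 := L - P, 2 := L - P - 1))" using A f by (simp add: ex)
    then show ?thesis using A 3 by (intro exI[of _ 5] exI[of _ "M(7 := L - P, 2 := L - P - 1)"]) (simp add: nn_def)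
  qed
qed

lemma done_blk:
  assumes A: "M 0 = E" "M 1 = L" "M 3 = 1" "M 5 = P" "M 11 = 0" "VI E M W" "11 < E" "P + 1 < E"
  shows "\<exists>t M'. t \<le> 14 \<and> run prog t (57, M) = (74, M') \<and> M' 0 = E \<and> M' 3 = 1 \<and> M' 8 = P + 1
      \<and> M' 9 = 1 \<and> M' 10 = nn (L - P) \<and> M' 11 = 0 \<and> VI E M' (W(P + 1 := nn (L - P) + 1))"
proof -
  obtain t1 M1 where t1: "t1 \<le> 5" and r1: "run prog t1 (57, M) = (63, M1)" and
    M1: "M1 0 = E" "M1 3 = 1" "M1 5 = P" "M1 7 = nn (L - P)" "M1 11 = 0" "VI E M1 W"
    using done_a[OF A(1-7)] by blast
  define M2 where "M2 = M1(8 := P + 1, 9 := nn (L - P) + 1)"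
  have r2: "run prog 2 (63, M1) = (65, M2)" using M1 A by (simp add: ex M2_def)
  have M2: "M2 0 = E" "M2 3 = 1" "M2 8 = P + 1" "M2 9 = nn (L - P) + 1" "M2 7 = nn (L - P)" "M2 11 = 0" "VI E M2 W"
    using M1 A by (simp_all add: M2_def)
  obtain M3 where r3: "run prog 5 (65, M2) = (72, M3)" and
     M3r: "\<forall>r. r \<le> 11 \<longrightarrow> r \<noteq> 2 \<longrightarrow> M3 r = M2 r" and M3: "VI E M3 (W(P + 1 := M2 9))"
    using w65[OF M2(1,3) _ _ A(7) M2(7)] A by auto
  define M4 where "M4 = M3(9 := 1, 10 := M3 7 + M3 11)"
  have r4: "run prog 2 (72, M3) = (74, M4)" by (simp add: ex M4_def)
  have "run prog (t1 + 2 + 5 + 2) (57, M) = (74, M4)" by (rule run_seq[OF run_seq[OF run_seq[OF r1 r2] r3] r4])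
  moreover have "M4 0 = E \<and> M4 3 = 1 \<and> M4 8 = P + 1 \<and> M4 9 = 1 \<and> M4 10 = nn (L - P) \<and> M4 11 = 0
     \<and> VI E M4 (W(P + 1 := nn (L - P) + 1))"
    using M3r M2 M3 A by (simp add: M4_def)
  ultimately show ?thesis using t1 by (intro exI[of _ "t1 + 2 + 5 + 2"] exI[of _ M4]) simp
qed

fun wr :: "nat \<Rightarrow> nat \<Rightarrow> nat \<Rightarrow> (nat \<Rightarrow> nat) \<Rightarrow> (nat \<Rightarrow> nat)" where
  "wr p j 0 W = W"
| "wr p j (Suc c) W = wr (p + 2) (j + 1) c (W(p + 1 := 0, p + 2 := j))"

lemma edge_loop:
  assumes E: "11 < E"
  shows "M 0 = E \<Longrightarrow> M 3 = 1 \<Longrightarrow> M 8 = p \<Longrightarrow> M 9 = j \<Longrightarrow> M 10 = c \<Longrightarrow> M 11 = 0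
    \<Longrightarrow> VI E M W \<Longrightarrow> 1 \<le> p \<Longrightarrow> p + 2 * c < E \<Longrightarrow>
    \<exists>t M'. t \<le> 16 * c + 1 \<and> run prog t (74, M) = (94, M') \<and> M' 0 = E \<and> M' 8 = p + 2 * c
       \<and> VI E M' (wr p j c W)"
proof (induction c arbitrary: M p j W)
  case 0
  have "run prog 1 (74, M) = (94, M)" using 0 by (simp add: ex)
  then show ?case using 0 by (intro exI[of _ 1] exI[of _ M]) simp
next
  case (Suc c)
  define M1 where "M1 = M(8 := p + 1)"
  have r1: "run prog 2 (74, M) = (76, M1)" using Suc.prems by (simp add: ex M1_def)
  obtain M2 where r2: "run prog 5 (76, M1) = (83, M2)" and
     M2r: "\<forall>r. r \<le> 11 \<longrightarrow> r \<noteq> 2 \<longrightarrow> M2 r = M1 r" and M2: "VI E M2 (W(p + 1 := M1 11))"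
    using w76[of M1 E "p + 1" W] Suc.prems E by (auto simp: M1_def)
  define M3 where "M3 = M2(8 := p + 2)"
  have r3: "run prog 1 (83, M2) = (84, M3)" using M2r Suc.prems by (simp add: ex M3_def M1_def)
  obtain M4 where r4: "run prog 5 (84, M3) = (91, M4)" and
     M4r: "\<forall>r. r \<le> 11 \<longrightarrow> r \<noteq> 2 \<longrightarrow> M4 r = M3 r" and M4: "VI E M4 ((W(p + 1 := M1 11))(p + 2 := M3 9))"
    using w84[of M3 E "p + 2" "W(p + 1 := M1 11)"] Suc.prems E M2 M2r by (auto simp: M3_def M1_def)
  define M5 where "M5 = M4(9 := j + 1, 10 := c)"
  have r5: "run prog 3 (91, M4) = (74, M5)" using M4r M2r Suc.prems by (simp add: ex M5_def M3_def M1_def)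
  have M5: "M5 0 = E" "M5 3 = 1" "M5 8 = p + 2" "M5 9 = j + 1" "M5 10 = c" "M5 11 = 0"
     "VI E M5 (W(p + 1 := 0, p + 2 := j))"
    using M4r M2r Suc.prems M4 E by (simp_all add: M5_def M3_def M1_def)
  obtain t M' where t: "t \<le> 16 * c + 1" and rr: "run prog t (74, M5) = (94, M')" and
    M': "M' 0 = E \<and> M' 8 = p + 2 + 2 * c \<and> VI E M' (wr (p + 2) (j + 1) c (W(p + 1 := 0, p + 2 := j)))"
  proof -
    have p1: "1 \<le> p + 2" and p2: "p + 2 + 2 * c < E" using Suc.prems by auto
    show ?thesis using Suc.IH[OF M5 p1 p2] that by blast
  qed
  have "run prog (2 + 5 + 1 + 5 + 3 + t) (74, M) = (94, M')"
    by (rule run_seq[OF run_seq[OF run_seq[OF run_seq[OF run_seq[OF r1 r2] r3] r4] r5] rr])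
  then show ?case using t M' by (intro exI[of _ "2 + 5 + 1 + 5 + 3 + t"] exI[of _ M']) simp
qed

lemma end_blk: "M 0 = E \<Longrightarrow> run prog 2 (94, M) = (97, M(E := M 8))" by (simp add: ex)
lemma garb_blk: "M 0 = E \<Longrightarrow> run prog 1 (96, M) = (97, M(E := M 1))" by (simp add: ex)

lemma epi0:
  assumes A: "M 0 = E" "11 < E"
  shows "\<exists>M'. run prog 34 (97, M) = (131, M') \<and> M' 0 = M E \<and> (\<forall>a. 1 \<le> a \<longrightarrow> a \<le> 11 \<longrightarrow> M' a = M (E + a))
     \<and> (\<forall>a. 11 < a \<longrightarrow> a < E \<longrightarrow> M' a = M a)"
  using A by (simp add: ex) presburger

lemma epi:
  assumes A: "M 0 = E" "11 < E" "VI E M W"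
  shows "\<exists>M'. run prog 34 (97, M) = (131, M') \<and> M' 0 = M E \<and> (\<forall>a. 1 \<le> a \<longrightarrow> a < E \<longrightarrow> M' a = W a)"
proof -
  obtain M' where r: "run prog 34 (97, M) = (131, M')" and M': "M' 0 = M E" "\<forall>a. 1 \<le> a \<longrightarrow> a \<le> 11 \<longrightarrow> M' a = M (E + a)"
     "\<forall>a. 11 < a \<longrightarrow> a < E \<longrightarrow> M' a = M a" using epi0[of M E, OF A(1,2)] by blast
  have "\<forall>a. 1 \<le> a \<longrightarrow> a < E \<longrightarrow> M' a = W a"
  proof (intro allI impI)
    fix a assume a: "1 \<le> a" "a < E"
    then have "V E M a = W a" using A(3) by (simp add: VI_def)
    then show "M' a = W a" using M' a by (cases "a \<le> 11") (auto simp: V_def)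
  qed
  then show ?thesis using r M' by blast
qed




lemma wr_closed: "wr p j c W a = (if p < a \<and> a \<le> p + 2*c then (if odd (a - p) then 0 else j + (a - p) div 2 - 1) else W a)"
proof (induction c arbitrary: p j W)
  case 0 then show ?case by simp
next
  case (Suc c)
  show ?case
  proof (cases "a = p + 1 \<or> a = p + 2")
    case True then show ?thesis by (auto simp: Suc.IH)
  next
    case False
    note nF = False
    have "wr p j (Suc c) W a = (if p + 2 < a \<and> a \<le> p + 2 + 2 * c then (if odd (a - (p + 2)) then 0 else j + 1 + (a - (p + 2)) div 2 - 1) else W a)"
      using False by (simp add: Suc.IH)
    also have "\<dots> = (if p < a \<and> a \<le> p + 2*Suc c then (if odd (a - p) then 0 else j + (a - p) div 2 - 1) else W a)"
    proof (cases "p + 2 < a")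
      case True
      then obtain d where d: "a = p + 2 + d" by (metis less_imp_add_positive add.commute less_or_eq_imp_le le_add_diff_inverse)
      have "a - p = d + 2" using d by simp
      then show ?thesis using True d by auto
    next
      case False
      note False2 = False
      have "\<not> p < a" using nF False2 by linarith
      then show ?thesis using False2 by simp
    qed
    finally show ?thesis .
  qed
qed

lemma concat_edges: "concat (map (\<lambda>i. [0, i]) [1..<c+1]) = map (\<lambda>q. if even q then 0 else (q + 1) div 2) [0..<2*c]"
proof (induction c)
  case 0 then show ?case by simp
next
  case (Suc c)
  have e: "2 * Suc c = Suc (Suc (2*c))" by simp
  have "[0..<2 * Suc c] = [0..<2*c] @ [2*c, 2*c+1]" unfolding e by simp
  then show ?case using Suc by simp
qed


lemma init_snd: "snd (init_config xs) a = (if a = 0 then length xs else if a \<le> length xs then xs ! (a - 1) else 0)"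
  by (simp add: init_config_def)

lemma init_eq: "init_config xs = (0, snd (init_config xs))" unfolding init_config_def snd_conv by (rule refl)

lemma out_xs: "(\<And>i. i < length xs \<Longrightarrow> W (Suc i) = xs ! i) \<Longrightarrow> map (\<lambda>i. W (Suc i)) [0..<length xs] = xs"
  by (rule nth_equalityI) auto

lemma output_131: "output_of (131, M) = map (\<lambda>i. M (Suc i)) [0..<M 0]" by (simp add: output_of_def)

lemma final_list:
  assumes P: "P \<le> length xs" and W: "\<And>a. 1 \<le> a \<Longrightarrow> a \<le> length xs \<Longrightarrow> W0 a = xs ! (a - 1)"
  shows "map (\<lambda>i. wr (P+1) 1 c (W0(P+1 := c+1)) (Suc i)) [0..<P+1+2*c]
     = take P xs @ [c+1] @ map (\<lambda>q. if even q then 0 else (q+1) div 2) [0..<2*c]"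
proof (rule nth_equalityI)
  show "length (map (\<lambda>i. wr (P+1) 1 c (W0(P+1 := c+1)) (Suc i)) [0..<P+1+2*c]) =
     length (take P xs @ [c+1] @ map (\<lambda>q. if even q then 0 else (q+1) div 2) [0..<2*c])"
    using P by simp
next
  fix i assume "i < length (map (\<lambda>i. wr (P+1) 1 c (W0(P+1 := c+1)) (Suc i)) [0..<P+1+2*c])"
  then have i: "i < P+1+2*c" by simp
  have lt: "length (take P xs) = P" using P by simp
  have lhs: "map (\<lambda>i. wr (P+1) 1 c (W0(P+1 := c+1)) (Suc i)) [0..<P+1+2*c] ! i = wr (P+1) 1 c (W0(P+1 := c+1)) (Suc i)"
    using i by (simp del: upt_Suc)
  consider "i < P" | "i = P" | "P < i" by linarith
  then show "map (\<lambda>i. wr (P+1) 1 c (W0(P+1 := c+1)) (Suc i)) [0..<P+1+2*c] ! i =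
     (take P xs @ [c+1] @ map (\<lambda>q. if even q then 0 else (q+1) div 2) [0..<2*c]) ! i"
  proof cases
    case 1
    have "wr (P+1) 1 c (W0(P+1 := c+1)) (Suc i) = W0 (Suc i)" using 1 by (simp add: wr_closed)
    also have "\<dots> = xs ! i" using W[of "Suc i"] 1 P by simp
    moreover have "(take P xs @ [c+1] @ map (\<lambda>q. if even q then 0 else (q+1) div 2) [0..<2*c]) ! i = xs ! i"
      using 1 lt P by (simp add: nth_append del: upt_Suc)
    ultimately show ?thesis using lhs by (simp only:)
  next
    case 2
    have "wr (P+1) 1 c (W0(P+1 := c+1)) (Suc i) = c + 1" using 2 by (simp add: wr_closed)
    moreover have "(take P xs @ [c+1] @ map (\<lambda>q. if even q then 0 else (q+1) div 2) [0..<2*c]) ! i = c + 1"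
      using 2 lt by (simp add: nth_append del: upt_Suc)
    ultimately show ?thesis using lhs by (simp only:)
  next
    case 3
    define q where "q = i - P - 1"
    have q: "i = P + 1 + q" using 3 by (simp add: q_def)
    have q2: "q < 2*c" using i q by simp
    have a: "Suc i - (P + 1) = Suc q" using q by simp
    have "wr (P+1) 1 c (W0(P+1 := c+1)) (Suc i) = (if even q then 0 else (q+1) div 2)"
      using q2 q a by (simp add: wr_closed)
    moreover have "(take P xs @ [c+1] @ map (\<lambda>q. if even q then 0 else (q+1) div 2) [0..<2*c]) ! i
       = (if even q then 0 else (q+1) div 2)" using q q2 lt by (simp add: nth_append del: upt_Suc)
    ultimately show ?thesis using lhs by (simp only:)
  qed
qed

lemma prog_correct:
  "\<exists>t. t \<le> 101 * (length xs + 1) \<and> halted prog (run prog t (init_config xs))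
      \<and> output_of (run prog t (init_config xs)) = redf xs"
proof -
  define L where "L = length xs"
  define I where "I = snd (init_config xs)"
  have ic: "init_config xs = (0, I)" unfolding I_def by (rule init_eq)
  have I: "\<And>a. I a = (if a = 0 then L else if a \<le> L then xs ! (a - 1) else 0)" unfolding I_def L_def by (rule init_snd)
  have hl: "halted prog (131, M)" for M by (simp add: halted_def prog_len)
  show ?thesis
  proof (cases "xs = [] \<or> hd xs = 0")
    case True
    have I1: "I 1 = 0" using True I by (cases xs) (auto simp: L_def)
    have r: "run prog 1 (init_config xs) = (131, I)" using I1 by (simp add: ic ex)
    have I0: "I 0 = length xs" using I[of 0] by (simp add: L_def)
    have o: "output_of (131, I) = xs" unfolding output_131 I0 by (rule out_xs) (simp add: I L_def)
    have "redf xs = xs" unfolding redf_def by (rule if_P) (use True in blast)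
    then show ?thesis using r o hl by (intro exI[of _ 1]) simp
  next
    case False
    define m where "m = hd xs"
    have L1: "1 \<le> L" using False by (cases xs) (auto simp: L_def)
    have m1: "1 \<le> m" using False by (auto simp: m_def)
    have I0: "I 0 = L" and I1: "I 1 = m" using I[of 0] I[of 1] L1 False by (auto simp: m_def hd_conv_nth)
    define E where "E = 12 * L + m"
    have E11: "11 < E" using L1 m1 by (simp add: E_def)
    define M0 where "M0 = I(0 := E, 1 := L)"
    have r1: "run prog 14 (init_config xs) = (14, M0)"
      using boot1[of I] I0 I1 m1 by (simp add: ic M0_def E_def)
    obtain M1 where r2: "run prog 36 (14, M0) = (50, M1)" and M1: "M1 0 = E" "M1 1 = L" "M1 3 = 1" "M1 4 = m"
      "M1 5 = 1" "M1 6 = m" "M1 11 = 0" "VI E M1 (M0(1 := m))"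
      using boot2[of M0 E L m] L1 m1 by (auto simp: M0_def E_def)
    define W0 where "W0 = M0(1 := m)"
    have W0: "\<And>a. 1 \<le> a \<Longrightarrow> W0 a = I a" using I1 by (simp add: W0_def M0_def)
    obtain t2 M2 where t2: "t2 \<le> 7*(L - 1) + 7" and
      r3: "run prog t2 (50, M1) = (if 1 + m*m \<le> L then 57 else 96, M2)" and
      M2: "M2 0 = E \<and> M2 1 = L \<and> M2 3 = 1 \<and> M2 11 = 0 \<and> VI E M2 W0 \<and> (1 + m*m \<le> L \<longrightarrow> M2 5 = 1 + m*m)"
      using mul_loop[OF E11 m1 M1(1-7) M1(8)[folded W0_def] L1] by blast
    show ?thesis
    proof (cases "1 + m*m \<le> L")
      case False
      note False2 = False
      have r4: "run prog 1 (96, M2) = (97, M2(E := L))" using garb_blk[of M2 E] M2 by simp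
      obtain M3 where r5: "run prog 34 (97, M2(E := L)) = (131, M3)" and M3: "M3 0 = L"
        "\<forall>a. 1 \<le> a \<longrightarrow> a < E \<longrightarrow> M3 a = W0 a"
        using epi[of "M2(E := L)" E W0] M2 E11 by auto
      have "run prog (14 + 36 + t2 + 1 + 34) (init_config xs) = (131, M3)"
      proof -
        have r3': "run prog t2 (50, M1) = (96, M2)" using r3 False2 by simp
        show ?thesis by (rule run_seq[OF run_seq[OF run_seq[OF run_seq[OF r1 r2] r3'] r4] r5])
      qed
      moreover have "output_of (131, M3) = xs"
      proof -
        have "\<And>i. i < length xs \<Longrightarrow> M3 (Suc i) = xs ! i"
          using M3(2) W0 I E11 by (simp add: E_def L_def)
        then show ?thesis unfolding output_131 M3(1) L_def by (rule out_xs)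
      qed
      moreover have "redf xs = xs" unfolding redf_def by (rule if_P) (use False2 in \<open>simp add: m_def L_def\<close>)
      moreover have "14 + 36 + t2 + 1 + 34 \<le> 101 * (length xs + 1)"
      proof -
        have "t2 \<le> 7 * L" using t2 L1 by (cases L) auto
        then show ?thesis unfolding L_def[symmetric] by (simp add: algebra_simps)
      qed
      ultimately show ?thesis using hl by (intro exI[of _ "14 + 36 + t2 + 1 + 34"]) simp
    next
      case True
      note True2 = True
      define P where "P = 1 + m*m"
      have PL: "P \<le> L" using True2 by (simp add: P_def)
      have r3': "run prog t2 (50, M1) = (57, M2)" using r3 True2 by simp
      have M2P: "M2 5 = P" using M2 True2 by (simp add: P_def)
      have M2': "M2 0 = E" "M2 1 = L" "M2 3 = 1" "M2 11 = 0" "VI E M2 W0" using M2 by auto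
      have PE: "P + 1 < E" using PL m1 L1 by (simp add: E_def)
      obtain t3 M3 where t3: "t3 \<le> 14" and r4: "run prog t3 (57, M2) = (74, M3)" and
        M3: "M3 0 = E" "M3 3 = 1" "M3 8 = P + 1" "M3 9 = 1" "M3 10 = nn (L - P)" "M3 11 = 0"
         "VI E M3 (W0(P + 1 := nn (L - P) + 1))"
        using done_blk[OF M2'(1,2,3) M2P M2'(4,5) E11 PE] by blast
      define c where "c = nn (L - P)"
      have cL: "c \<le> L - P" by (simp add: c_def nn_def)
      have pc: "P + 1 + 2 * c < E" using cL PL m1 L1 by (simp add: E_def)
      obtain t4 M4 where t4: "t4 \<le> 16 * c + 1" and r5: "run prog t4 (74, M3) = (94, M4)" and
        M4: "M4 0 = E" "M4 8 = P + 1 + 2 * c" "VI E M4 (wr (P + 1) 1 c (W0(P + 1 := c + 1)))"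
        using edge_loop[OF E11 M3(1-6)[folded c_def] M3(7)[folded c_def] _ pc] by auto
      have r6: "run prog 2 (94, M4) = (97, M4(E := P + 1 + 2 * c))" using end_blk[of M4 E] M4 by simp
      obtain M5 where r7: "run prog 34 (97, M4(E := P + 1 + 2 * c)) = (131, M5)" and M5: "M5 0 = P + 1 + 2 * c"
        "\<forall>a. 1 \<le> a \<longrightarrow> a < E \<longrightarrow> M5 a = wr (P + 1) 1 c (W0(P + 1 := c + 1)) a"
        using epi[of "M4(E := P + 1 + 2 * c)" E "wr (P + 1) 1 c (W0(P + 1 := c + 1))"] M4 E11 by auto
      have "run prog (14 + 36 + t2 + t3 + t4 + 2 + 34) (init_config xs) = (131, M5)"
        by (rule run_seq[OF run_seq[OF run_seq[OF run_seq[OF run_seq[OF run_seq[OF r1 r2] r3'] r4] r5] r6] r7])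
      moreover have "14 + 36 + t2 + t3 + t4 + 2 + 34 \<le> 101 * (length xs + 1)"
      proof -
        have "c \<le> L" using cL by simp
        moreover have "t2 \<le> 7 * L" using t2 L1 by (cases L) auto
        ultimately show ?thesis using t2 t3 t4 unfolding L_def[symmetric] by (simp add: algebra_simps)
      qed
      moreover have "output_of (131, M5) = redf xs"
      proof -
        have "output_of (131, M5) = map (\<lambda>i. wr (P + 1) 1 c (W0(P + 1 := c + 1)) (Suc i)) [0..<P+1+2*c]"
          unfolding output_131 M5(1) using M5(2) pc by simp
        also have "\<dots> = take P xs @ [c+1] @ map (\<lambda>q. if even q then 0 else (q+1) div 2) [0..<2*c]"
          by (rule final_list) (use PL W0 I in \<open>auto simp: L_def\<close>)
        also have "\<dots> = take P xs @ [c+1] @ concat (map (\<lambda>i. [0,i]) [1..<c+1])" by (simp only: concat_edges)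
        also have "\<dots> = redf xs"
          using False True2 by (simp add: redf_def Let_def P_def c_def m_def L_def del: upt_Suc)
        finally show ?thesis .
      qed
      ultimately show ?thesis using hl by (intro exI[of _ "14 + 36 + t2 + t3 + t4 + 2 + 34"]) simp
    qed
  qed
qed


lemma bitlen_le: "bitlen n \<le> n"
proof (induction n rule: less_induct)
  case (less n)
  show ?case
  proof (cases "n = 0")
    case True then show ?thesis by (subst bitlen.simps) simp
  next
    case False
    then have "bitlen (n div 2) \<le> n div 2" using less by simp
    moreover have "Suc (n div 2) \<le> n" using False by simp
    ultimately show ?thesis using False by (subst bitlen.simps) simp
  qed
qed

lemma size_append: "input_size (xs @ ys) = input_size xs + input_size ys"
  by (simp add: input_size_def)

lemma len_le_size: "length xs \<le> input_size xs"
  by (induction xs) (simp_all add: input_size_def)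

lemma size_take: "input_size (take k xs) \<le> input_size xs"
proof -
  have "input_size xs = input_size (take k xs) + input_size (drop k xs)"
    using size_append[of "take k xs" "drop k xs"] by simp
  then show ?thesis by simp
qed

lemma size_bound: "(\<forall>x\<in>set ys. x \<le> B) \<Longrightarrow> input_size ys \<le> length ys * (B + 1)"
proof (induction ys)
  case Nil then show ?case by (simp add: input_size_def)
next
  case (Cons y ys)
  have "bitlen y \<le> B" using bitlen_le[of y] Cons.prems by (meson le_trans list.set_intros(1))
  then have "input_size (y # ys) \<le> (B + 1) + input_size ys" by (simp add: input_size_def del: bitlen.simps)
  then show ?case using Cons by simp
qed

lemma redf_size: "input_size (redf xs) \<le> 101 * (input_size xs + 1) ^ 2"
proof (cases "xs = [] \<or> hd xs = 0 \<or> length xs < 1 + hd xs * hd xs")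
  case True
  then have "redf xs = xs" unfolding redf_def by (rule if_P)
  then show ?thesis by (simp add: power2_eq_square)
next
  case False
  define S where "S = input_size xs"
  define P where "P = 1 + hd xs * hd xs"
  define c where "c = nn (length xs - P)"
  have "c \<le> length xs" by (simp add: c_def nn_def)
  then have cS: "c \<le> S" using len_le_size[of xs] unfolding S_def by linarith
  define ys where "ys = [c+1] @ concat (map (\<lambda>i. [0,i]) [1..<c+1])"
  have r: "redf xs = take P xs @ ys"
    unfolding redf_def ys_def using False by (simp add: Let_def P_def c_def del: upt_Suc)
  have el: "\<forall>x\<in>set ys. x \<le> c + 1" unfolding ys_def by auto
  have len: "length ys = 1 + 2 * c"
  proof -
    have "length (concat (map (\<lambda>i. [0,i]) [1..<c+1])) = 2 * c"
      by (simp only: concat_edges length_map length_upt)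
    then show ?thesis unfolding ys_def by (simp only: length_append) simp
  qed
  have "input_size ys \<le> (1 + 2 * c) * (c + 1 + 1)"
    using size_bound[OF el] len by simp
  also have "\<dots> \<le> (1 + 2 * S) * (S + 1 + 1)" using cS by (intro mult_mono) auto
  finally have b: "input_size ys \<le> (1 + 2 * S) * (S + 1 + 1)" .
  have "input_size (redf xs) = input_size (take P xs) + input_size ys" unfolding r by (rule size_append)
  also have "\<dots> \<le> S + (1 + 2 * S) * (S + 1 + 1)" using size_take[of P xs] b unfolding S_def by linarith
  also have "\<dots> \<le> 101 * (S + 1) ^ 2" by (simp add: power2_eq_square algebra_simps)
  finally show ?thesis by (simp add: S_def)
qed

theorem mainTheorem8:
  shows "poly_reducible PermRep_instances PermRep_yes TreeRep_instances TreeRep_yes"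
proof -
  have A: "\<forall>xs. (\<exists>t. t \<le> 101 * (input_size xs + 1) ^ 2 \<and> halted prog (run prog t (init_config xs)) \<and>
            output_of (run prog t (init_config xs)) = redf xs) \<and> input_size (redf xs) \<le> 101 * (input_size xs + 1) ^ 2"
  proof (intro allI conjI)
    fix xs
    obtain t where t: "t \<le> 101 * (length xs + 1)" and h: "halted prog (run prog t (init_config xs))"
      and o: "output_of (run prog t (init_config xs)) = redf xs" using prog_correct by blast
    have "101 * (length xs + 1) \<le> 101 * (input_size xs + 1) ^ 2"
    proof -
      have "length xs + 1 \<le> input_size xs + 1" using len_le_size[of xs] by simp
      also have "\<dots> \<le> (input_size xs + 1) ^ 2" by (simp add: power2_eq_square)
      finally show ?thesis by simp
    qed
    then show "\<exists>t. t \<le> 101 * (input_size xs + 1) ^ 2 \<and> halted prog (run prog t (init_config xs)) \<and>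
            output_of (run prog t (init_config xs)) = redf xs" using t h o by (intro exI[of _ t]) simp
    show "input_size (redf xs) \<le> 101 * (input_size xs + 1) ^ 2" by (rule redf_size)
  qed
  have "poly_time_computable redf" unfolding poly_time_computable_def using A by blast
  then show ?thesis unfolding poly_reducible_def using redf_correct by blast
qed


end
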